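(* Every rooted duplication tree $T$ with $n$ leaves admits a unique finite sequence of duplication events $(B_1,B_2,\dots,B_k)$ with $B_1\preceq B_2\preceq\cdots\preceq B_k$ such that applying $B_1,\dots,B_k$ in this order to the single root gene produces $T$ (with its leaf order).
   Context: A duplication event on a current ordered array of genes $(g_1,\dots,g_m)$ is specified by a contiguous set of indices $B=\{i,i+1,\dots,i+\ell-1\}$ with $1\le i\le i+\ell-1\le m$; applying it gives each $g_j$, $j\in B$, two new children $\mathrm{lc}(g_j),\mathrm{rc}(g_j)$ and replaces $g_i,\dots,g_{i+\ell-1}$ by $\mathrm{lc}(g_i),\dots,\mathrm{lc}(g_{i+\ell-1}),\mathrm{rc}(g_i),\dots,\mathrm{rc}(g_{i+\ell-1})$. A rooted duplication tree is a rooted binary tree with ordered leaves arising from a single root gene by a finite sequence of such events (internal nodes = duplicated genes, leaves = final genes in order). For index sets $B_1,B_2$ write $B_1\prec B_2$ iff $\max B_1<\min B_2$, and $B_1\preceq B_2$ iff not $B_2\prec B_1$ (i.e. $\min B_1\le \max B_2$). *)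

theory Defs
  imports Main
begin

text \<open>A gene is identified by its address in the duplication tree: the root gene is the
  empty list, and the left/right children of a gene g are g @ [False] / g @ [True].
  The ordered array of current genes is a list of addresses; the final array determines the
  rooted duplication tree (internal nodes = proper prefixes) together with its leaf order.\<close>

type_synonym gene = "bool list"

definition lc :: "gene \<Rightarrow> gene" where "lc g = g @ [False]"
definition rc :: "gene \<Rightarrow> gene" where "rc g = g @ [True]"

definition is_event :: "nat \<Rightarrow> nat set \<Rightarrow> bool" where
  "is_event m B \<longleftrightarrow> (\<exists>i l. 1 \<le> i \<and> 1 \<le> l \<and> i + l - 1 \<le> m \<and> B = {i..i + l - 1})"

definition apply_event :: "nat set \<Rightarrow> gene list \<Rightarrow> gene list" where
  "apply_event B gs =
     (let i = Min B; l = card B; blk = take l (drop (i - 1) gs)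
      in take (i - 1) gs @ map lc blk @ map rc blk @ drop (i - 1 + l) gs)"

fun run :: "nat set list \<Rightarrow> gene list \<Rightarrow> gene list option" where
  "run [] gs = Some gs"
| "run (B # Bs) gs = (if is_event (length gs) B then run Bs (apply_event B gs) else None)"

definition dup_tree :: "gene list \<Rightarrow> bool" where
  "dup_tree T \<longleftrightarrow> (\<exists>Bs. run Bs [[]] = Some T)"

definition blk_prec :: "nat set \<Rightarrow> nat set \<Rightarrow> bool" where
  "blk_prec B1 B2 \<longleftrightarrow> Max B1 < Min B2"

definition blk_preceq :: "nat set \<Rightarrow> nat set \<Rightarrow> bool" where
  "blk_preceq B1 B2 \<longleftrightarrow> \<not> blk_prec B2 B1"

end

theory Submission imports Defs begin

definition E :: "nat \<Rightarrow> nat \<Rightarrow> nat set" where "E p l = {Suc p..p+l}"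

definition ev :: "nat \<Rightarrow> nat \<Rightarrow> gene list \<Rightarrow> gene list" where
  "ev p l gs = take p gs @ map lc (take l (drop p gs)) @ map rc (take l (drop p gs)) @ drop (p+l) gs"

definition canon :: "nat set list \<Rightarrow> bool" where
  "canon Bs \<longleftrightarrow> (\<forall>j. Suc j < length Bs \<longrightarrow> blk_preceq (Bs ! j) (Bs ! Suc j))"

definition und :: "gene list \<Rightarrow> nat \<Rightarrow> nat \<Rightarrow> bool" where
  "und T q m \<longleftrightarrow> 0 < m \<and> q + 2*m \<le> length T \<and>
     (\<forall>t<m. \<exists>y. T!(q+t) = y@[False] \<and> T!(q+m+t) = y@[True])"

definition pf :: "gene list \<Rightarrow> bool" where
  "pf gs \<longleftrightarrow> (\<forall>i<length gs. \<forall>j<length gs. (\<exists>z. gs!j = gs!i @ z) \<longrightarrow> i = j)"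

lemma E_Min: "0 < l \<Longrightarrow> Min (E p l) = Suc p" unfolding E_def by (rule Min_eqI) auto
lemma E_Max: "0 < l \<Longrightarrow> Max (E p l) = p + l" unfolding E_def by (rule Max_eqI) auto
lemma E_card: "card (E p l) = l" by (simp add: E_def)

lemma apply_E: "0 < l \<Longrightarrow> apply_event (E p l) gs = ev p l gs"
  by (simp add: apply_event_def E_Min E_card ev_def Let_def)

lemma is_event_E: "is_event m B \<longleftrightarrow> (\<exists>p l. B = E p l \<and> 0 < l \<and> p + l \<le> m)"
  unfolding is_event_def E_def
proof
  assume "\<exists>i l. 1 \<le> i \<and> 1 \<le> l \<and> i + l - 1 \<le> m \<and> B = {i..i + l - 1}"
  then obtain i l where "1 \<le> i" "1 \<le> l" "i + l - 1 \<le> m" "B = {i..i + l - 1}" by blast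
  then show "\<exists>p l. B = {Suc p..p + l} \<and> 0 < l \<and> p + l \<le> m"
    by (intro exI[of _ "i - 1"] exI[of _ l]) auto
next
  assume "\<exists>p l. B = {Suc p..p + l} \<and> 0 < l \<and> p + l \<le> m"
  then obtain p l where "B = {Suc p..p + l}" "0 < l" "p + l \<le> m" by blast
  then show "\<exists>i l. 1 \<le> i \<and> 1 \<le> l \<and> i + l - 1 \<le> m \<and> B = {i..i + l - 1}"
    by (intro exI[of _ "Suc p"] exI[of _ l]) auto
qed

lemma preceq_E: "0 < l \<Longrightarrow> 0 < l' \<Longrightarrow> blk_preceq (E p l) (E p' l') \<longleftrightarrow> p < p' + l'"
  by (auto simp: blk_preceq_def blk_prec_def E_Min E_Max)

lemma length_ev: "p + l \<le> length A \<Longrightarrow> length (ev p l A) = length A + l"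
  by (simp add: ev_def)

lemma ev_nth: "p + l \<le> length A \<Longrightarrow> k < length A + l \<Longrightarrow>
  ev p l A ! k = (if k < p then A!k else if k < p+l then lc (A!k)
     else if k < p+2*l then rc (A!(k-l)) else A!(k-l))"
  apply (auto simp: ev_def nth_append min_def)
  apply (rule arg_cong[where f=rc], rule arg_cong[where f="(!) A"])
  by arith

lemma run_snoc: "run (xs @ [B]) gs = (case run xs gs of None \<Rightarrow> None
   | Some A \<Rightarrow> if is_event (length A) B then Some (apply_event B A) else None)"
  by (induction xs arbitrary: gs) auto

lemma canon_snoc: "canon (xs @ [x]) \<longleftrightarrow> canon xs \<and> (xs \<noteq> [] \<longrightarrow> blk_preceq (last xs) x)"
  unfolding canon_def
  apply (auto simp: nth_append last_conv_nth)
  subgoal premises prems for j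
  proof -
    have "j = length xs - Suc 0" using prems(3,4) by linarith
    then show ?thesis using prems(2) by simp
  qed
  done

lemma ev_nth2: "p + l \<le> length A \<Longrightarrow> k < length A + l \<Longrightarrow>
  ev p l A ! k = A ! (if k < p + l then k else k - l) @
     (if k < p then [] else if k < p+l then [False] else if k < p+2*l then [True] else [])"
  by (simp add: ev_nth lc_def rc_def)

lemma pre_app: assumes h: "x @ z = y @ s" "length s \<le> 1"
  shows "(\<exists>z'. y = x @ z') \<or> (\<exists>b. s = [b] \<and> x = y @ [b])"
proof (cases s)
  case Nil
  then show ?thesis using h by auto
next
  case (Cons b r)
  then have s: "s = [b]" using h by auto
  show ?thesis
  proof (cases z rule: rev_cases)
    case Nil then show ?thesis using h s by auto
  next
    case (snoc z' c) then show ?thesis using h s by auto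
  qed
qed

lemma pf_ev: assumes "p + l \<le> length A" "pf A" shows "pf (ev p l A)"
  unfolding pf_def
proof (intro allI impI)
  fix i j assume i: "i < length (ev p l A)" and j: "j < length (ev p l A)"
    and pr: "\<exists>z. ev p l A ! j = ev p l A ! i @ z"
  define g where "g k = (if k < p + l then k else k - l)" for k
  define s where "s k = (if k < p then [] else if k < p+l then [False] else if k < p+2*l then [True] else [])" for k
  have len: "length (ev p l A) = length A + l" using assms(1) by (rule length_ev)
  have e: "ev p l A ! k = A ! g k @ s k" if "k < length A + l" for k
    using ev_nth2[OF assms(1) that] by (simp add: g_def s_def)
  have gl: "g k < length A" if "k < length A + l" for k using that assms(1) by (auto simp: g_def)
  have sl: "length (s k) \<le> 1" for k by (simp add: s_def)
  obtain z where z: "A ! g i @ s i @ z = A ! g j @ s j"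
    using pr e i j len by auto
  have pfA: "\<And>a b z. a < length A \<Longrightarrow> b < length A \<Longrightarrow> A!b = A!a @ z \<Longrightarrow> a = b"
    using assms(2) unfolding pf_def by blast
  have gij: "g i = g j"
  proof -
    from pre_app[OF z sl] show ?thesis
    proof
      assume "\<exists>z'. A ! g j = A ! g i @ z'"
      then show ?thesis using pfA gl i j len by metis
    next
      assume "\<exists>b. s j = [b] \<and> A ! g i = A ! g j @ [b]"
      then obtain b where "s j = [b]" "A ! g i = A ! g j @ [b]" by blast
      then have "g j = g i" using pfA gl i j len by metis
      then show ?thesis using \<open>A ! g i = A ! g j @ [b]\<close> by simp
    qed
  qed
  have "s i @ z = s j" using z gij by simp
  then show "i = j" using gij i j len unfolding g_def s_def
    by (auto split: if_splits)
qed

lemma run_inv: "run Bs gs = Some T \<Longrightarrow> pf gs \<Longrightarrow> pf T \<and> length gs \<le> length T"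
proof (induction Bs arbitrary: gs)
  case Nil then show ?case by simp
next
  case (Cons B Bs)
  then have ev: "is_event (length gs) B" and r: "run Bs (apply_event B gs) = Some T"
    by (auto split: if_splits)
  from ev obtain p l where B: "B = E p l" "0 < l" "p + l \<le> length gs" by (auto simp: is_event_E)
  have "pf (ev p l gs)" using pf_ev B Cons.prems(2) by blast
  then show ?case using Cons.IH[of "ev p l gs"] r B length_ev[of p l gs] by (simp add: apply_E)
qed

lemma pf_root: "pf [[]]" by (simp add: pf_def)

lemma ev_comm: assumes "p + l \<le> p'" "p' + l' \<le> length A"
  shows "ev (p'+l) l' (ev p l A) = ev p l (ev p' l' A)"
proof (rule nth_equalityI)
  have l1: "length (ev p l A) = length A + l" using assms by (simp add: length_ev)
  have l2: "length (ev p' l' A) = length A + l'" using assms by (simp add: length_ev)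
  show "length (ev (p'+l) l' (ev p l A)) = length (ev p l (ev p' l' A))"
    using assms l1 l2 by (simp add: length_ev)
  fix k assume "k < length (ev (p'+l) l' (ev p l A))"
  then have k: "k < length A + l + l'" using assms l1 by (simp add: length_ev)
  have a1: "p + l \<le> length A" "p'+l + l' \<le> length (ev p l A)" "p + l \<le> length (ev p' l' A)"
    using assms l1 l2 by auto
  have k1: "k < length (ev p l A) + l'" "k < length (ev p' l' A) + l" using k l1 l2 by auto
  consider "k < p" | "p \<le> k" "k < p + l" | "p + l \<le> k" "k < p + 2*l" | "p + 2*l \<le> k" "k < p' + l"
    | "p' + l \<le> k" "k < p' + l + l'" | "p' + l + l' \<le> k" "k < p'+l+2*l'" | "p'+l+2*l' \<le> k" by linarith
  then show "ev (p'+l) l' (ev p l A) ! k = ev p l (ev p' l' A) ! k"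
  proof cases
    case 1 then show ?thesis using ev_nth[OF a1(2) k1(1)] ev_nth[OF a1(3) k1(2)] ev_nth[OF a1(1), of k] ev_nth[OF assms(2), of k] k assms by simp
  next
    case 2 then show ?thesis using ev_nth[OF a1(2) k1(1)] ev_nth[OF a1(3) k1(2)] ev_nth[OF a1(1), of k] ev_nth[OF assms(2), of k] k assms by simp
  next
    case 3 then have "k - l < p'" using assms by arith
    with 3 show ?thesis using ev_nth[OF a1(2) k1(1)] ev_nth[OF a1(3) k1(2)] ev_nth[OF a1(1), of k] ev_nth[OF assms(2), of "k-l"] k assms by simp
  next
    case 4 then have "k - l < p'" using assms by arith
    with 4 show ?thesis using ev_nth[OF a1(2) k1(1)] ev_nth[OF a1(3) k1(2)] ev_nth[OF a1(1), of k] ev_nth[OF assms(2), of "k-l"] k assms by simp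
  next
    case 5 then have "p' \<le> k - l" "k - l < p' + l'" using assms by arith+
    with 5 show ?thesis using ev_nth[OF a1(2) k1(1)] ev_nth[OF a1(3) k1(2)] ev_nth[OF a1(1), of k] ev_nth[OF assms(2), of "k-l"] k assms by simp
  next
    case 6 then have "p' + l' \<le> k - l" "k - l < p' + 2*l'" "p + 2*l \<le> k - l'" "k - l - l' = k - l' - l" using assms by arith+
    with 6 show ?thesis using ev_nth[OF a1(2) k1(1)] ev_nth[OF a1(3) k1(2)] ev_nth[OF a1(1), of "k-l'"] ev_nth[OF assms(2), of "k-l"] k assms by (simp add: algebra_simps)
  next
    case 7 then have "p' + 2*l' \<le> k - l" "p + 2*l \<le> k - l'" "k - l - l' = k - l' - l" using assms by arith+
    with 7 show ?thesis using ev_nth[OF a1(2) k1(1)] ev_nth[OF a1(3) k1(2)] ev_nth[OF a1(1), of "k-l'"] ev_nth[OF assms(2), of "k-l"] k assms by (simp add: algebra_simps)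
  qed
qed

lemma ev_inj: assumes "ev p l A = ev p l A'" "p + l \<le> length A" "p + l \<le> length A'"
  shows "A = A'"
proof (rule nth_equalityI)
  show eq: "length A = length A'" using assms length_ev[of p l A] length_ev[of p l A'] by simp
  fix k assume k: "k < length A"
  show "A ! k = A' ! k"
  proof (cases "k < p + l")
    case True
    have "ev p l A ! k = ev p l A' ! k" using assms by simp
    then show ?thesis using True k eq assms ev_nth[OF assms(2), of k] ev_nth[OF assms(3), of k]
      by (auto simp: lc_def split: if_splits)
  next
    case False
    have "ev p l A ! (k + l) = ev p l A' ! (k + l)" using assms by simp
    then show ?thesis using False k eq assms ev_nth[OF assms(2), of "k+l"] ev_nth[OF assms(3), of "k+l"]
      by (auto split: if_splits)
  qed
qed

lemma E_inj: "E p l = E p' l' \<Longrightarrow> 0 < l \<Longrightarrow> 0 < l' \<Longrightarrow> p = p' \<and> l = l'"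
  by (metis E_Max E_Min E_card Suc_inject)

lemma run_snocE:
  assumes "run (Bs @ [E p l]) gs = Some T" "0 < l"
  obtains A where "run Bs gs = Some A" "p + l \<le> length A" "T = ev p l A"
proof -
  from assms(1) obtain A where r: "run Bs gs = Some A" and e: "is_event (length A) (E p l)"
    and T: "T = apply_event (E p l) A"
    by (auto simp: run_snoc split: option.splits if_splits)
  from e obtain p' l' where "E p l = E p' l'" "0 < l'" "p' + l' \<le> length A" by (auto simp: is_event_E)
  then have "p + l \<le> length A" using E_inj assms(2) by blast
  then show ?thesis using that r T apply_E assms(2) by blast
qed

lemma run_snocE2:
  assumes "run (Bs @ [B]) gs = Some T"
  obtains A p l where "run Bs gs = Some A" "B = E p l" "0 < l" "p + l \<le> length A" "T = ev p l A"
proof -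
  from assms(1) obtain A where r: "run Bs gs = Some A" and e: "is_event (length A) B"
    and T: "T = apply_event B A"
    by (auto simp: run_snoc split: option.splits if_splits)
  from e obtain p l where "B = E p l" "0 < l" "p + l \<le> length A" by (auto simp: is_event_E)
  then show ?thesis using that r T apply_E by blast
qed

lemma und_ev: "0 < l \<Longrightarrow> p + l \<le> length A \<Longrightarrow> und (ev p l A) p l"
  unfolding und_def by (auto simp: length_ev ev_nth lc_def rc_def)

lemma und_unique: assumes "und T q m" "und T q m'" shows "m = m'"
proof -
  have "\<not> m < m'" if "und T q m" "und T q m'" for m m'
  proof
    assume "m < m'"
    from that(2) \<open>m < m'\<close> obtain y where "T!(q+m) = y@[False]" unfolding und_def by fastforce
    moreover from that(1) obtain y' where "T!(q+m+0) = y'@[True]" unfolding und_def by blast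
    ultimately show False by simp
  qed
  then show ?thesis using assms by (meson linorder_neqE_nat)
qed

lemma L: "run (Bs @ [E p l]) [[]] = Some T \<Longrightarrow> canon (Bs @ [E p l]) \<Longrightarrow> 0 < l \<Longrightarrow>
  und T q m \<Longrightarrow> q \<le> p"
proof (induction Bs arbitrary: p l T q m rule: rev_induct)
  case Nil
  from run_snocE[OF Nil.prems(1) Nil.prems(3)] obtain A where A: "run [] [[]] = Some A" "p + l \<le> length A" "T = ev p l A" .
  then have "A = [[]]" by simp
  then have "p = 0" "l = 1" "length T = 2" using A Nil.prems(3) by (auto simp: length_ev)
  then show ?case using Nil.prems(4) unfolding und_def by auto
next
  case (snoc B Bs)
  from run_snocE[OF snoc.prems(1) snoc.prems(3)] obtain A where
    A: "run (Bs @ [B]) [[]] = Some A" "p + l \<le> length A" "T = ev p l A" .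
  from run_snocE2[OF A(1)] obtain A' p' l' where
    A': "run Bs [[]] = Some A'" "B = E p' l'" "0 < l'" "p' + l' \<le> length A'" "A = ev p' l' A'" .
  have pfT: "pf T" using run_inv[OF snoc.prems(1) pf_root] by blast
  have can: "canon (Bs @ [B])" "p' < p + l"
  proof -
    have c: "canon (Bs@[B]) \<and> (Bs@[B] \<noteq> [] \<longrightarrow> blk_preceq (last (Bs@[B])) (E p l))"
      using snoc.prems(2) canon_snoc[of "Bs@[B]" "E p l"] by blast
    then show "canon (Bs @ [B])" "p' < p + l" using A'(2,3) snoc.prems(3) by (auto simp: preceq_E)
  qed
  have lenT: "length T = length A + l" using A by (simp add: length_ev)
  have Tn: "\<And>k. k < length A + l \<Longrightarrow> T ! k = (if k < p then A!k else if k < p+l then lc (A!k)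
     else if k < p+2*l then rc (A!(k-l)) else A!(k-l))" using ev_nth[OF A(2)] A(3) by simp
  have und: "0 < m" "q + 2*m \<le> length T" "\<And>t. t < m \<Longrightarrow> \<exists>y. T!(q+t) = y@[False] \<and> T!(q+m+t) = y@[True]"
    using snoc.prems(4) unfolding und_def by auto
  show ?case
  proof (rule ccontr)
    assume "\<not> q \<le> p"
    then have qp: "p < q" by simp
    show False
    proof (cases "p + 2*l \<le> q")
      case True
      have "und A (q - l) m"
        unfolding und_def
      proof (intro conjI allI impI)
        show "0 < m" by fact
        show "q - l + 2 * m \<le> length A" using und(2) lenT True by simp
        fix t assume t: "t < m"
        obtain y where y: "T!(q+t) = y@[False]" "T!(q+m+t) = y@[True]" using und(3)[OF t] by blast
        have f1: "q + t < length A + l" "\<not> q + t < p + 2*l"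
          using True t und(2) lenT by linarith+
        have f2: "q + t - l = q - l + t" using True by arith
        have "T!(q+t) = A!(q+t-l)" using Tn[OF f1(1)] f1(2) by simp
        then have e1: "T!(q+t) = A!(q - l + t)" by (simp only: f2)
        have f3: "q + m + t < length A + l" "\<not> q + m + t < p + 2*l"
          using True t und(2) lenT by linarith+
        have f4: "q + m + t - l = q - l + m + t" using True by arith
        have "T!(q+m+t) = A!(q+m+t-l)" using Tn[OF f3(1)] f3(2) by simp
        then have e2: "T!(q+m+t) = A!(q - l + m + t)" by (simp only: f4)
        from e1 e2 show "\<exists>y. A ! (q - l + t) = y @ [False] \<and> A ! (q - l + m + t) = y @ [True]"
          using y e1 e2 by (intro exI[of _ y]) simp
      qed
      have r': "run (Bs @ [E p' l']) [[]] = Some A" using A(1) A'(2) by simp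
      have c': "canon (Bs @ [E p' l'])" using can(1) A'(2) by simp
      have "q - l \<le> p'" by (rule snoc.IH[OF r' c' A'(3)]) fact
      then show False using can(2) True by linarith
    next
      case False
      obtain y0 where y0: "T!(q+0) = y0@[False]" "T!(q+m+0) = y0@[True]" using und(3)[OF und(1)] by blast
      have qlen: "q < length A + l" using und lenT by linarith
      have qpl: "q < p + l"
      proof (rule ccontr)
        assume "\<not> q < p + l"
        then have "T!q = rc (A!(q-l))" using Tn[OF qlen] qp False by simp
        then show False using y0(1) by (simp add: rc_def)
      qed
      have "T!q = lc (A!q)" using Tn[OF qlen] qp qpl by simp
      then have y0A: "y0 = A!q" using y0(1) by (simp add: lc_def)
      have ql: "q + l < length A + l" using qpl A(2) by linarith
      have "T!(q+l) = rc (A!(q+l-l))" using Tn[OF ql] qp qpl by simp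
      then have "T!(q+l) = T!(q+m)" using y0 y0A by (simp add: rc_def)
      moreover have "q + l < length T" "q + m < length T" using ql lenT und by linarith+
      ultimately have "q + m = q + l" using pfT unfolding pf_def by (metis append_Nil2)
      then have ml: "m = l" by simp
      have t: "l - 1 < m" using ml snoc.prems(3) by linarith
      obtain y where y: "T!(q+(l-1)) = y@[False]" using und(3)[OF t] by blast
      have k: "q + (l - 1) < length A + l" using qpl A(2) by linarith
      have k2: "\<not> q+(l-1) < p" "\<not> q+(l-1) < p+l" "q+(l-1) < p+2*l" using qp qpl snoc.prems(3) by linarith+
      have "T!(q+(l-1)) = rc (A!(q+(l-1)-l))" using Tn[OF k] k2 by (simp only: if_False if_True)
      then show False using y by (simp add: rc_def)
    qed
  qed
qed

lemma run_snocI: "run Bs gs = Some A \<Longrightarrow> 0 < l \<Longrightarrow> p + l \<le> length A \<Longrightarrow>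
   run (Bs @ [E p l]) gs = Some (ev p l A)"
  by (auto simp: run_snoc is_event_E apply_E)

lemma ins: "canon Cs \<Longrightarrow> run Cs A0 = Some A \<Longrightarrow> 0 < l \<Longrightarrow> p + l \<le> length A \<Longrightarrow>
  \<exists>Ds. canon Ds \<and> run Ds A0 = Some (ev p l A) \<and> Ds \<noteq> [] \<and>
    (last Ds = E p l \<or> (\<exists>p' l'. Cs \<noteq> [] \<and> last Cs = E p' l' \<and> 0 < l' \<and> last Ds = E (p'+l) l'))"
proof (induction Cs arbitrary: A p l rule: rev_induct)
  case Nil
  then have "run [E p l] A0 = Some (ev p l A)" using run_snocI[of "[]" A0 A l p] by simp
  moreover have "canon [E p l]" by (simp add: canon_def)
  ultimately show ?case by (intro exI[of _ "[E p l]"]) simp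
next
  case (snoc Bk Cs)
  from run_snocE2[OF snoc.prems(2)] obtain A' p' l' where
    A': "run Cs A0 = Some A'" "Bk = E p' l'" "0 < l'" "p' + l' \<le> length A'" "A = ev p' l' A'" .
  have c: "canon Cs" "Cs \<noteq> [] \<Longrightarrow> blk_preceq (last Cs) Bk"
    using snoc.prems(1) canon_snoc[of Cs Bk] by auto
  show ?case
  proof (cases "p' < p + l")
    case True
    have r: "run ((Cs @ [Bk]) @ [E p l]) A0 = Some (ev p l A)"
      using run_snocI[OF snoc.prems(2) snoc.prems(3,4)] .
    have "canon ((Cs @ [Bk]) @ [E p l])"
      using snoc.prems(1) True A'(2,3) snoc.prems(3) canon_snoc[of "Cs @ [Bk]" "E p l"]
      by (simp add: preceq_E)
    then show ?thesis using r by (intro exI[of _ "(Cs @ [Bk]) @ [E p l]"]) simp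
  next
    case False
    have pl: "p + l \<le> length A'" using False A'(4) by linarith
    from snoc.IH[OF c(1) A'(1) snoc.prems(3) pl] obtain Ds where
      Ds: "canon Ds" "run Ds A0 = Some (ev p l A')" "Ds \<noteq> []"
        "last Ds = E p l \<or> (\<exists>p'' l''. Cs \<noteq> [] \<and> last Cs = E p'' l'' \<and> 0 < l'' \<and> last Ds = E (p''+l) l'')"
      by blast
    have len: "p' + l + l' \<le> length (ev p l A')" using pl A'(4) by (simp add: length_ev)
    have r: "run (Ds @ [E (p'+l) l']) A0 = Some (ev p l A)"
      using run_snocI[OF Ds(2) A'(3) len] ev_comm[of p l p' l' A'] False A'(4,5) by simp
    have "blk_preceq (last Ds) (E (p'+l) l')"
      using Ds(4)
    proof
      assume "last Ds = E p l" then show ?thesis using False snoc.prems(3) A'(3) by (simp add: preceq_E)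
    next
      assume "\<exists>p'' l''. Cs \<noteq> [] \<and> last Cs = E p'' l'' \<and> 0 < l'' \<and> last Ds = E (p''+l) l''"
      then obtain p'' l'' where h: "Cs \<noteq> []" "last Cs = E p'' l''" "0 < l''" "last Ds = E (p''+l) l''" by blast
      have "p'' < p' + l'" using c(2)[OF h(1)] h(2,3) A'(2,3) by (simp add: preceq_E)
      then show ?thesis using h A'(3) by (simp add: preceq_E)
    qed
    then have "canon (Ds @ [E (p'+l) l'])" using Ds(1) canon_snoc by blast
    moreover have "\<exists>p'' l''. Cs @ [Bk] \<noteq> [] \<and> last (Cs @ [Bk]) = E p'' l'' \<and> 0 < l'' \<and>
        last (Ds @ [E (p'+l) l']) = E (p''+l) l''"
      using A'(2,3) by (intro exI[of _ p'] exI[of _ l']) simp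
    ultimately show ?thesis using r by (intro exI[of _ "Ds @ [E (p'+l) l']"]) blast
  qed
qed

lemma exist: "run Bs [[]] = Some T \<Longrightarrow> \<exists>Cs. canon Cs \<and> run Cs [[]] = Some T"
proof (induction Bs arbitrary: T rule: rev_induct)
  case Nil then show ?case by (intro exI[of _ "[]"]) (simp add: canon_def)
next
  case (snoc B Bs)
  from run_snocE2[OF snoc.prems] obtain A p l where
    A: "run Bs [[]] = Some A" "B = E p l" "0 < l" "p + l \<le> length A" "T = ev p l A" .
  from snoc.IH[OF A(1)] obtain Cs where "canon Cs" "run Cs [[]] = Some A" by blast
  from ins[OF this A(3,4)] show ?case using A(5) by blast
qed

lemma run_len: "run Bs [[]] = Some T \<Longrightarrow> 1 \<le> length T"
  using run_inv[OF _ pf_root] by fastforce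

lemma uniq: "run Bs [[]] = Some T \<Longrightarrow> canon Bs \<Longrightarrow> run Cs [[]] = Some T \<Longrightarrow> canon Cs \<Longrightarrow> Bs = Cs"
proof (induction Bs arbitrary: T Cs rule: rev_induct)
  case Nil
  then have T: "T = [[]]" by simp
  show ?case
  proof (cases Cs rule: rev_cases)
    case Nil then show ?thesis by simp
  next
    case (snoc Cs' C)
    from run_snocE2[OF Nil.prems(3)[unfolded snoc]] obtain A p l where
      A: "run Cs' [[]] = Some A" "C = E p l" "0 < l" "p + l \<le> length A" "T = ev p l A" .
    then have "length T = length A + l" by (simp add: length_ev)
    then show ?thesis using T A(3) run_len[OF A(1)] by simp
  qed
next
  case (snoc B Bs)
  from run_snocE2[OF snoc.prems(1)] obtain A p l where
    A: "run Bs [[]] = Some A" "B = E p l" "0 < l" "p + l \<le> length A" "T = ev p l A" .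
  have lT: "2 \<le> length T" using A run_len[OF A(1)] by (simp add: length_ev)
  show ?case
  proof (cases Cs rule: rev_cases)
    case Nil then have "T = [[]]" using snoc.prems(3) by simp
    then show ?thesis using lT by simp
  next
    case (snoc Cs' C)
    from run_snocE2[OF snoc.prems(3)[unfolded snoc]] obtain A' p' l' where
      A': "run Cs' [[]] = Some A'" "C = E p' l'" "0 < l'" "p' + l' \<le> length A'" "T = ev p' l' A'" .
    have u1: "und T p l" using und_ev[OF A(3,4)] A(5) by simp
    have u2: "und T p' l'" using und_ev[OF A'(3,4)] A'(5) by simp
    have "p' \<le> p" using L[OF _ _ A(3) u2] snoc.prems(1,2) A(2) by simp
    moreover have "p \<le> p'" using L[OF _ _ A'(3) u1] snoc.prems(3,4) A'(2) snoc by simp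
    ultimately have pp: "p = p'" by simp
    then have ll: "l = l'" using und_unique u1 u2 by blast
    have AA: "A = A'" using ev_inj[of p l A A'] A A' pp ll by simp
    have cB: "canon Bs" using snoc.prems(2) canon_snoc by blast
    have cC: "canon Cs'" using snoc.prems(4)[unfolded snoc] canon_snoc by blast
    have "Bs = Cs'" using snoc.IH[OF A(1) cB _ cC] A'(1) AA by simp
    then show ?thesis using snoc A(2) A'(2) pp ll by simp
  qed
qed

theorem lemma3p3:
  fixes T :: "gene list" and n :: nat
  assumes "dup_tree T" and "length T = n"
  shows "\<exists>!Bs. run Bs [[]] = Some T \<and>
              (\<forall>j. Suc j < length Bs \<longrightarrow> blk_preceq (Bs ! j) (Bs ! Suc j))"
proof -
  from assms(1) obtain Bs where "run Bs [[]] = Some T" unfolding dup_tree_def by blast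
  from exist[OF this] obtain Cs where Cs: "canon Cs" "run Cs [[]] = Some T" by blast
  show ?thesis
  proof (rule ex1I[of _ Cs])
    show "run Cs [[]] = Some T \<and> (\<forall>j. Suc j < length Cs \<longrightarrow> blk_preceq (Cs ! j) (Cs ! Suc j))"
      using Cs unfolding canon_def by blast
  next
    fix Ds assume "run Ds [[]] = Some T \<and> (\<forall>j. Suc j < length Ds \<longrightarrow> blk_preceq (Ds ! j) (Ds ! Suc j))"
    then show "Ds = Cs" using uniq[of Ds T Cs] Cs unfolding canon_def by blast
  qed
qed

end
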